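(* Let $\mathbb{U}$ be the Urysohn space and $\mathcal{K}(\mathbb{U})$ the standard Borel space (with the Effros Borel structure) of closed subsets of $\mathbb{U}$. The set $\mathcal{ALC}\subseteq\mathcal{K}(\mathbb{U})$ of all closed subsets of $\mathbb{U}$ that are almost locally compact is a Borel subset of $\mathcal{K}(\mathbb{U})$.
   Context: A topological space is almost locally compact if it contains a dense locally compact subspace. *)

theory Defs
  imports "HOL-Analysis.Analysis"
begin

text \<open>Kat\v{e}tov (one-point extension) functions on a finite set A of a metric space.\<close>
definition katetov_on :: "'a::metric_space set \<Rightarrow> ('a \<Rightarrow> real) \<Rightarrow> bool" where
  "katetov_on A f \<longleftrightarrow>
     (\<forall>x\<in>A. \<forall>y\<in>A. \<bar>f x - f y\<bar> \<le> dist x y \<and> dist x y \<le> f x + f y)"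

text \<open>The Urysohn space: the (unique up to isometry) Polish metric space with the
  finite extension property. The type 'a carries this metric.\<close>
definition urysohn_extension_property :: "'a::metric_space itself \<Rightarrow> bool" where
  "urysohn_extension_property (TYPE('a)) \<longleftrightarrow>
     (\<forall>(A::'a set) f. finite A \<and> katetov_on A f \<longrightarrow> (\<exists>z. \<forall>x\<in>A. dist z x = f x))"

definition effros_borel :: "'a::topological_space set measure" where
  "effros_borel = sigma {F. closed F} {{F. closed F \<and> F \<inter> U \<noteq> {}} | U. open U}"

definition almost_locally_compact :: "'a::topological_space set \<Rightarrow> bool" where
  "almost_locally_compact F \<longleftrightarrow>
     (\<exists>D. D \<subseteq> F \<and> F \<subseteq> closure D \<and> locally_compact_space (top_of_set D))"

end

theory Submission
  imports Defs
begin

definition rr :: "nat \<Rightarrow> real" where "rr n = 1 / real (Suc n)"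

lemma rr_pos: "rr n > 0" by (simp add: rr_def)

lemma rr_small: "e > 0 \<Longrightarrow> \<exists>n. rr n < e"
  unfolding rr_def using reals_Archimedean by (metis inverse_eq_divide)

definition TBc :: "(nat \<Rightarrow> 'a::metric_space) \<Rightarrow> 'a set \<Rightarrow> 'a \<Rightarrow> real \<Rightarrow> bool" where
  "TBc d F a \<rho> \<longleftrightarrow> (\<forall>m. \<exists>N. \<forall>i n. F \<inter> ball (d i) (rr n) \<noteq> {} \<and> ball (d i) (rr n) \<subseteq> ball a \<rho>
      \<longrightarrow> (\<exists>j<N. dist (d i) (d j) < rr m + rr n))"

definition Chr :: "(nat \<Rightarrow> 'a::metric_space) \<Rightarrow> 'a set \<Rightarrow> bool" where
  "Chr d F \<longleftrightarrow> (\<forall>i n. F \<inter> ball (d i) (rr n) \<noteq> {} \<longrightarrow>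
     (\<exists>i' n'. F \<inter> ball (d i') (rr n') \<noteq> {} \<and> ball (d i') (rr n') \<subseteq> ball (d i) (rr n)
        \<and> TBc d F (d i') (2 * rr n')))"

lemma dense_approx:
  fixes d :: "nat \<Rightarrow> 'a::metric_space"
  assumes dense: "\<And>X. open X \<Longrightarrow> X \<noteq> {} \<Longrightarrow> \<exists>i. d i \<in> X" and "e > 0"
  shows "\<exists>i. dist (d i) x < e"
proof -
  have "\<exists>i. d i \<in> ball x e" using dense[of "ball x e"] assms(2) by auto
  then show ?thesis by (auto simp: dist_commute)
qed

lemma TB1:
  fixes d :: "nat \<Rightarrow> 'a::metric_space"
  assumes dense: "\<And>X. open X \<Longrightarrow> X \<noteq> {} \<Longrightarrow> \<exists>i. d i \<in> X"
    and tb: "totally_bounded (F \<inter> ball a \<rho>)"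
  shows "TBc d F a \<rho>"
  unfolding TBc_def
proof
  fix m
  have "rr m / 2 > 0" using rr_pos by simp
  then obtain k where k: "finite k" "F \<inter> ball a \<rho> \<subseteq> (\<Union>x\<in>k. {y. dist x y < rr m / 2})"
    using tb unfolding totally_bounded_metric by blast
  have "\<forall>x. \<exists>j. dist (d j) x < rr m / 2" using dense_approx[OF dense \<open>rr m / 2 > 0\<close>] by blast
  then obtain g where g: "\<And>x. dist (d (g x)) x < rr m / 2" by metis
  define N where "N = Suc (Max (insert 0 (g ` k)))"
  have gN: "g x < N" if "x \<in> k" for x
    using that k(1) unfolding N_def by (simp add: le_imp_less_Suc)
  show "\<exists>N. \<forall>i n. F \<inter> ball (d i) (rr n) \<noteq> {} \<and> ball (d i) (rr n) \<subseteq> ball a \<rho>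
      \<longrightarrow> (\<exists>j<N. dist (d i) (d j) < rr m + rr n)"
  proof (rule exI[of _ N], intro allI impI)
    fix i n assume h: "F \<inter> ball (d i) (rr n) \<noteq> {} \<and> ball (d i) (rr n) \<subseteq> ball a \<rho>"
    then obtain z where z: "z \<in> F" "dist (d i) z < rr n" by auto
    then have "z \<in> F \<inter> ball a \<rho>" using h by auto
    then obtain x where x: "x \<in> k" "dist x z < rr m / 2" using k by auto
    have "dist (d i) (d (g x)) \<le> dist (d i) z + dist z x + dist x (d (g x))"
      using dist_triangle[of "d i" "d (g x)" z] dist_triangle[of z "d (g x)" x] by linarith
    also have "\<dots> < rr n + rr m / 2 + rr m / 2"
      using z x g[of x] by (simp add: dist_commute)
    finally have "dist (d i) (d (g x)) < rr m + rr n" by linarith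
    then show "\<exists>j<N. dist (d i) (d j) < rr m + rr n" using gN[OF x(1)] by blast
  qed
qed

lemma TB2:
  fixes d :: "nat \<Rightarrow> 'a::metric_space"
  assumes dense: "\<And>X. open X \<Longrightarrow> X \<noteq> {} \<Longrightarrow> \<exists>i. d i \<in> X"
    and tb: "TBc d F a \<rho>"
  shows "totally_bounded (F \<inter> ball a \<rho>)"
  unfolding totally_bounded_metric
proof (intro allI impI)
  fix e :: real assume "e > 0"
  then obtain m where m: "rr m < e / 3" using rr_small[of "e/3"] by auto
  obtain N where N: "\<And>i n. F \<inter> ball (d i) (rr n) \<noteq> {} \<and> ball (d i) (rr n) \<subseteq> ball a \<rho>
      \<Longrightarrow> (\<exists>j<N. dist (d i) (d j) < rr m + rr n)"
    using tb unfolding TBc_def by blast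
  show "\<exists>k. finite k \<and> F \<inter> ball a \<rho> \<subseteq> (\<Union>x\<in>k. {y. dist x y < e})"
  proof (intro exI conjI)
    show "finite (d ` {..<N})" by simp
    show "F \<inter> ball a \<rho> \<subseteq> (\<Union>x\<in>d ` {..<N}. {y. dist x y < e})"
    proof
      fix z assume z: "z \<in> F \<inter> ball a \<rho>"
      obtain \<delta> where \<delta>: "\<delta> > 0" "ball z \<delta> \<subseteq> ball a \<rho>"
        using z open_ball open_contains_ball by blast
      obtain n where n: "rr n < min (\<delta>/2) (rr m)" using rr_small[of "min (\<delta>/2) (rr m)"] \<delta> rr_pos by auto
      obtain i where i: "dist (d i) z < rr n" using dense_approx[OF dense rr_pos] by blast
      have "ball (d i) (rr n) \<subseteq> ball z \<delta>"
      proof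
        fix w assume "w \<in> ball (d i) (rr n)"
        then have "dist (d i) w < rr n" by simp
        then have "dist z w < \<delta>" using i n dist_triangle[of z w "d i"]
          by (simp add: dist_commute)
        then show "w \<in> ball z \<delta>" by simp
      qed
      then have "F \<inter> ball (d i) (rr n) \<noteq> {} \<and> ball (d i) (rr n) \<subseteq> ball a \<rho>"
        using z i \<delta> by auto
      then obtain j where j: "j < N" "dist (d i) (d j) < rr m + rr n" using N by blast
      have "dist (d j) z \<le> dist (d j) (d i) + dist (d i) z" by (rule dist_triangle)
      then have "dist (d j) z < e" using j i n m by (simp add: dist_commute)
      then show "z \<in> (\<Union>x\<in>d ` {..<N}. {y. dist x y < e})" using j by auto
    qed
  qed
qed

lemma compact_tb: "compact (S::'a::metric_space set) \<Longrightarrow> totally_bounded S"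
  by (simp add: compact_eq_totally_bounded totally_bounded_metric ball_def)


lemma ALC1:
  fixes d :: "nat \<Rightarrow> 'a::metric_space"
  assumes dense: "\<And>X. open X \<Longrightarrow> X \<noteq> {} \<Longrightarrow> \<exists>i. d i \<in> X"
    and alc: "almost_locally_compact F"
  shows "Chr d F"
  unfolding Chr_def
proof (intro allI impI)
  fix i n assume "F \<inter> ball (d i) (rr n) \<noteq> {}"
  then obtain x where x: "x \<in> F" "x \<in> ball (d i) (rr n)" by auto
  obtain D where D: "D \<subseteq> F" "F \<subseteq> closure D" "locally_compact_space (top_of_set D)"
    using alc unfolding almost_locally_compact_def by blast
  have "ball (d i) (rr n) \<inter> closure D \<noteq> {}" using x D(2) by auto
  then have "ball (d i) (rr n) \<inter> D \<noteq> {}" using open_Int_closure_eq_empty[of "ball (d i) (rr n)" D] by auto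
  then obtain y where y: "y \<in> D" "y \<in> ball (d i) (rr n)" by auto
  obtain U K where UK: "openin (top_of_set D) U" "compactin (top_of_set D) K" "y \<in> U" "U \<subseteq> K"
    using D(3) y(1) unfolding locally_compact_space_def by fastforce
  obtain W where W: "open W" "U = D \<inter> W" using UK(1) by (auto simp: openin_open)
  have K: "compact K" "K \<subseteq> D" using UK(2) by (auto simp: compactin_subtopology)
  have "F \<inter> W \<subseteq> W \<inter> closure D" using D(2) by auto
  also have "\<dots> \<subseteq> closure (W \<inter> D)" by (rule open_Int_closure_subset[OF W(1)])
  also have "\<dots> \<subseteq> closure K" using W(2) UK(4) by (intro closure_mono) auto
  also have "\<dots> = K" using K(1) by (simp add: compact_imp_closed)
  finally have FWK: "F \<inter> W \<subseteq> K" .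
  have "open (W \<inter> ball (d i) (rr n))" using W(1) by auto
  moreover have "y \<in> W \<inter> ball (d i) (rr n)" using y UK(3) W(2) by auto
  ultimately obtain r where r: "r > 0" "ball y r \<subseteq> W \<inter> ball (d i) (rr n)"
    using open_contains_ball by blast
  obtain n' where n': "rr n' < r / 3" using rr_small[of "r/3"] r by auto
  obtain i' where i': "dist (d i') y < rr n'" using dense_approx[OF dense rr_pos] by blast
  have B2: "ball (d i') (2 * rr n') \<subseteq> ball y r"
  proof
    fix w assume "w \<in> ball (d i') (2 * rr n')"
    then have "dist (d i') w < 2 * rr n'" by simp
    then have "dist y w < r" using i' n' dist_triangle[of y w "d i'"] by (simp add: dist_commute)
    then show "w \<in> ball y r" by simp
  qed
  have B1: "ball (d i') (rr n') \<subseteq> ball (d i') (2 * rr n')" using rr_pos[of n'] by (intro subset_ball) simp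
  have "F \<inter> ball (d i') (2 * rr n') \<subseteq> K" using B2 r(2) FWK by blast
  then have "totally_bounded (F \<inter> ball (d i') (2 * rr n'))"
    using compact_tb[OF K(1)] totally_bounded_subset by blast
  then have "TBc d F (d i') (2 * rr n')" using TB1 dense by blast
  moreover have "F \<inter> ball (d i') (rr n') \<noteq> {}" using i' y(1) D(1) by auto
  moreover have "ball (d i') (rr n') \<subseteq> ball (d i) (rr n)" using B1 B2 r(2) by blast
  ultimately show "\<exists>i' n'. F \<inter> ball (d i') (rr n') \<noteq> {} \<and> ball (d i') (rr n') \<subseteq> ball (d i) (rr n)
        \<and> TBc d F (d i') (2 * rr n')" by blast
qed

lemma ALC2:
  fixes d :: "nat \<Rightarrow> 'a::complete_space"
  assumes dense: "\<And>X. open X \<Longrightarrow> X \<noteq> {} \<Longrightarrow> \<exists>i. d i \<in> X"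
    and cl: "closed F" and ch: "Chr d F"
  shows "almost_locally_compact F"
proof -
  define D where "D = {x\<in>F. \<exists>e>0. compact (F \<inter> cball x e)}"
  have "locally_compact_space (top_of_set D)"
    unfolding locally_compact_space_def
  proof
    fix x assume "x \<in> topspace (top_of_set D)"
    then have x: "x \<in> D" by simp
    then obtain e where e: "e > 0" "compact (F \<inter> cball x e)" "x \<in> F" unfolding D_def by auto
    have Kc: "compact (F \<inter> cball x (e/2))"
    proof -
      have "F \<inter> cball x (e/2) = (F \<inter> cball x e) \<inter> cball x (e/2)" using e(1) by auto
      then show ?thesis using compact_Int_closed[OF e(2)] by auto
    qed
    have KD: "F \<inter> cball x (e/2) \<subseteq> D"
    proof
      fix y assume y: "y \<in> F \<inter> cball x (e/2)"
      have "F \<inter> cball y (e/2) = (F \<inter> cball x e) \<inter> cball y (e/2)"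
      proof -
        have "cball y (e/2) \<subseteq> cball x e"
        proof
          fix w assume "w \<in> cball y (e/2)"
          then show "w \<in> cball x e" using y dist_triangle[of x w y] by simp
        qed
        then show ?thesis by auto
      qed
      then have "compact (F \<inter> cball y (e/2))" using compact_Int_closed[OF e(2)] by auto
      then show "y \<in> D" using y e(1) unfolding D_def by (auto intro!: exI[of _ "e/2"])
    qed
    show "\<exists>U K. openin (top_of_set D) U \<and> compactin (top_of_set D) K \<and> x \<in> U \<and> U \<subseteq> K"
    proof (intro exI conjI)
      show "openin (top_of_set D) (D \<inter> ball x (e/2))" by (rule openin_open_Int) simp
      show "compactin (top_of_set D) (F \<inter> cball x (e/2))"
        using Kc KD by (simp add: compactin_subtopology)
      show "x \<in> D \<inter> ball x (e/2)" using x e by simp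
      show "D \<inter> ball x (e/2) \<subseteq> F \<inter> cball x (e/2)" unfolding D_def by auto
    qed
  qed
  moreover have "F \<subseteq> closure D"
  proof
    fix x assume xF: "x \<in> F"
    show "x \<in> closure D" unfolding closure_approachable
    proof (intro allI impI)
      fix e :: real assume "e > 0"
      then obtain n where n: "rr n < e / 2" using rr_small[of "e/2"] by auto
      obtain i where i: "dist (d i) x < rr n" using dense_approx[OF dense rr_pos] by blast
      have "F \<inter> ball (d i) (rr n) \<noteq> {}" using xF i by auto
      then obtain i' n' where c: "F \<inter> ball (d i') (rr n') \<noteq> {}" "ball (d i') (rr n') \<subseteq> ball (d i) (rr n)"
        "TBc d F (d i') (2 * rr n')"
        using ch unfolding Chr_def by blast
      obtain y where y: "y \<in> F" "dist (d i') y < rr n'" using c(1) by auto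
      have tb: "totally_bounded (F \<inter> ball (d i') (2 * rr n'))" by (rule TB2[OF dense c(3)])
      have sub: "F \<inter> cball y (rr n' / 2) \<subseteq> F \<inter> ball (d i') (2 * rr n')"
      proof
        fix w assume w: "w \<in> F \<inter> cball y (rr n' / 2)"
        then have "dist (d i') w < 2 * rr n'" using y dist_triangle[of "d i'" w y] rr_pos[of n'] by simp
        then show "w \<in> F \<inter> ball (d i') (2 * rr n')" using w by simp
      qed
      have "closed (F \<inter> cball y (rr n' / 2))" using cl by auto
      then have "complete (F \<inter> cball y (rr n' / 2))" by (simp add: complete_eq_closed)
      moreover have "totally_bounded (F \<inter> cball y (rr n' / 2))" using tb sub totally_bounded_subset by blast
      ultimately have "compact (F \<inter> cball y (rr n' / 2))"
        by (simp add: compact_eq_totally_bounded totally_bounded_metric ball_def)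
      then have "y \<in> D" unfolding D_def using y rr_pos[of n'] by (auto intro!: exI[of _ "rr n' / 2"])
      moreover have "dist y x < e"
      proof -
        have "y \<in> ball (d i) (rr n)" using c(2) y by auto
        then have "dist (d i) y < rr n" by simp
        then show ?thesis using i n dist_triangle[of y x "d i"] by (simp add: dist_commute)
      qed
      ultimately show "\<exists>y\<in>D. dist y x < e" by blast
    qed
  qed
  moreover have "D \<subseteq> F" unfolding D_def by auto
  ultimately show ?thesis unfolding almost_locally_compact_def by blast
qed

lemma space_eb: "space (effros_borel :: 'a::topological_space set measure) = {F. closed F}"
  unfolding effros_borel_def by (subst space_measure_of) auto

lemma sets_eb: "sets (effros_borel :: 'a::topological_space set measure) =
   sigma_sets {F. closed F} {{F. closed F \<and> F \<inter> U \<noteq> {}} | U. open U}"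
  unfolding effros_borel_def by (subst sets_measure_of) auto

lemma atom_eb:
  "{F \<in> space (effros_borel :: 'a::metric_space set measure). F \<inter> ball a r \<noteq> {}} \<in> sets effros_borel"
proof -
  have "{F \<in> space (effros_borel :: 'a set measure). F \<inter> ball a r \<noteq> {}}
        = {F. closed F \<and> F \<inter> ball a r \<noteq> {}}" by (simp add: space_eb)
  moreover have "{F. closed F \<and> F \<inter> ball a r \<noteq> {}} \<in> sets (effros_borel :: 'a set measure)"
    unfolding sets_eb by (rule sigma_sets.Basic) blast
  ultimately show ?thesis by simp
qed

lemma Chr_meas:
  fixes d :: "nat \<Rightarrow> 'a::metric_space"
  shows "{F \<in> space effros_borel. Chr d F} \<in> sets effros_borel"
  unfolding Chr_def TBc_def
  by (intro sets.sets_Collect_countable_All sets.sets_Collect_imp sets.sets_Collect_countable_Ex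
      sets.sets_Collect_conj sets.sets_Collect_const atom_eb)

theorem proposition3p7:
  assumes "urysohn_extension_property TYPE('a::polish_space)"
  shows "{F::'a set. closed F \<and> almost_locally_compact F} \<in> sets effros_borel"
proof -
  obtain D :: "'a set" where D: "countable D" "\<And>X. open X \<Longrightarrow> X \<noteq> {} \<Longrightarrow> \<exists>d\<in>D. d \<in> X"
    by (rule countable_dense_setE) blast
  have "D \<noteq> {}" using D(2)[of UNIV] by auto
  define d where "d = from_nat_into D"
  have rd: "range d = D" unfolding d_def using range_from_nat_into[OF \<open>D \<noteq> {}\<close> D(1)] .
  have dense: "\<exists>i. d i \<in> X" if "open X" "X \<noteq> {}" for X
    using D(2)[OF that] rd by (metis rangeE)
  have "{F::'a set. closed F \<and> almost_locally_compact F} = {F \<in> space effros_borel. Chr d F}"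
    using ALC1[OF dense] ALC2[OF dense] by (auto simp: space_eb)
  then show ?thesis using Chr_meas[of d] by simp
qed

end
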